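(* Let $n\ge2$, let $f$ be a $\gamma_{tr2}(P_2\square P_n)$-function such that the number of vertices $v$ with $f(v)=\emptyset$ is minimum among all $\gamma_{tr2}(P_2\square P_n)$-functions, and let $a_j=|f((0,j))|+|f((1,j))|$ for $j\in\{0,\dots,n-1\}$. Then $a_j+a_{j+1}\ge3$ for every $j\in\{0,1,\dots,n-2\}$.
   Context: $P_m$ denotes the directed path with vertex set $\{0,1,\dots,m-1\}$ and arcs $(i,i+1)$ for $0\le i\le m-2$. The Cartesian product $D_1\square D_2$ has vertex set $V(D_1)\times V(D_2)$, with an arc from $(x_1,y_1)$ to $(x_2,y_2)$ iff either $(x_1,x_2)$ is an arc of $D_1$ and $y_1=y_2$, or $x_1=x_2$ and $(y_1,y_2)$ is an arc of $D_2$. For a digraph $D$ and positive integer $k$, a $k$-rainbow dominating function on $D$ is $f:V(D)\to\mathcal P(\{1,\dots,k\})$ such that every $v$ with $f(v)=\emptyset$ satisfies $\bigcup_{u\in N^-(v)}f(u)=\{1,\dots,k\}$, where $N^-(v)$ is the set of in-neighbors of $v$; its weight is $\sum_v|f(v)|$. It is total if additionally the subdigraph induced by $\{v:f(v)\ne\emptyset\}$ has no isolated vertex (a vertex with neither in- nor out-neighbors in it). $\gamma_{trk}(D)$ is the minimum weight of a total $k$-rainbow dominating function, and a $\gamma_{trk}(D)$-function is one attaining it. *)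

theory Defs
  imports Main
begin

type_synonym 'v digraph = "'v set \<times> ('v \<times> 'v) set"

definition verts :: "'v digraph \<Rightarrow> 'v set" where "verts D = fst D"
definition arcs :: "'v digraph \<Rightarrow> ('v \<times> 'v) set" where "arcs D = snd D"

definition dipath :: "nat \<Rightarrow> nat digraph" where
  "dipath m = ({0..<m}, {(i, i+1) | i. i + 1 < m})"

definition cart_prod :: "'a digraph \<Rightarrow> 'b digraph \<Rightarrow> ('a \<times> 'b) digraph" where
  "cart_prod D1 D2 = (verts D1 \<times> verts D2,
     {((x1, y), (x2, y)) | x1 x2 y. (x1, x2) \<in> arcs D1 \<and> y \<in> verts D2}
   \<union> {((x, y1), (x, y2)) | x y1 y2. x \<in> verts D1 \<and> (y1, y2) \<in> arcs D2})"

definition in_nbrs :: "'v digraph \<Rightarrow> 'v \<Rightarrow> 'v set" where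
  "in_nbrs D v = {u. (u, v) \<in> arcs D}"

definition rainbow_dom :: "nat \<Rightarrow> 'v digraph \<Rightarrow> ('v \<Rightarrow> nat set) \<Rightarrow> bool" where
  "rainbow_dom k D f \<longleftrightarrow>
     (\<forall>v \<in> verts D. f v \<subseteq> {1..k}) \<and>
     (\<forall>v \<in> verts D. f v = {} \<longrightarrow> (\<Union>u \<in> in_nbrs D v. f u) = {1..k})"

text \<open>Total: the subdigraph induced by vertices with nonempty label has no isolated vertex.\<close>
definition total_rainbow_dom :: "nat \<Rightarrow> 'v digraph \<Rightarrow> ('v \<Rightarrow> nat set) \<Rightarrow> bool" where
  "total_rainbow_dom k D f \<longleftrightarrow> rainbow_dom k D f \<and>
     (\<forall>v \<in> verts D. f v \<noteq> {} \<longrightarrow>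
        (\<exists>u \<in> verts D. f u \<noteq> {} \<and> ((u, v) \<in> arcs D \<or> (v, u) \<in> arcs D)))"

definition rd_weight :: "'v digraph \<Rightarrow> ('v \<Rightarrow> nat set) \<Rightarrow> nat" where
  "rd_weight D f = (\<Sum>v \<in> verts D. card (f v))"

definition gamma_trk :: "nat \<Rightarrow> 'v digraph \<Rightarrow> nat" where
  "gamma_trk k D = (LEAST w. \<exists>f. total_rainbow_dom k D f \<and> rd_weight D f = w)"

definition is_gamma_trk_function :: "nat \<Rightarrow> 'v digraph \<Rightarrow> ('v \<Rightarrow> nat set) \<Rightarrow> bool" where
  "is_gamma_trk_function k D f \<longleftrightarrow>
     total_rainbow_dom k D f \<and> rd_weight D f = gamma_trk k D"

definition num_empty :: "'v digraph \<Rightarrow> ('v \<Rightarrow> nat set) \<Rightarrow> nat" where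
  "num_empty D f = card {v \<in> verts D. f v = {}}"

end

theory Submission
  imports Defs
begin

lemma verts_D: "verts (cart_prod (dipath 2) (dipath n)) = {0..<2} \<times> {0..<n}"
  by (simp add: cart_prod_def verts_def dipath_def)

lemma arcs_D: "((a,b),(c,d)) \<in> arcs (cart_prod (dipath 2) (dipath n)) \<longleftrightarrow>
   (a = 0 \<and> c = 1 \<and> b = d \<and> d < n) \<or> (a = c \<and> a < 2 \<and> d = Suc b \<and> d < n)"
  by (auto simp add: cart_prod_def verts_def arcs_def dipath_def)

lemma in_nbrs_D: "u \<in> in_nbrs (cart_prod (dipath 2) (dipath n)) v \<longleftrightarrow>
   (fst u = 0 \<and> fst v = 1 \<and> snd u = snd v \<and> snd v < n) \<or> (fst u = fst v \<and> fst u < 2 \<and> snd v = Suc (snd u) \<and> snd v < n)"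
  using arcs_D[of "fst u" "snd u" "fst v" "snd v" n] by (simp add: in_nbrs_def)

lemma card12: "(S::nat set) \<subseteq> {1..2} \<Longrightarrow> card S \<le> 2"
proof -
  assume a: "S \<subseteq> {1..2}"
  have "card S \<le> card {1..2::nat}" by (rule card_mono) (use a in auto)
  thus ?thesis by simp
qed

lemma fin12: "(S::nat set) \<subseteq> {1..2} \<Longrightarrow> finite S"
  using finite_subset by blast

lemma union2: "(A::nat set) \<union> B = {1..2} \<Longrightarrow> card A + card B \<ge> 2"
proof -
  assume a: "A \<union> B = {1..2}"
  have "card (A \<union> B) \<le> card A + card B" by (rule card_Un_le)
  thus ?thesis using a by simp
qed

theorem lemma4p2:
  fixes n :: nat and f :: "nat \<times> nat \<Rightarrow> nat set"
  assumes "n \<ge> 2"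
    and "is_gamma_trk_function 2 (cart_prod (dipath 2) (dipath n)) f"
    and "\<forall>g. is_gamma_trk_function 2 (cart_prod (dipath 2) (dipath n)) g \<longrightarrow>
           num_empty (cart_prod (dipath 2) (dipath n)) f \<le> num_empty (cart_prod (dipath 2) (dipath n)) g"
  shows "\<forall>j. j + 1 < n \<longrightarrow>
           (card (f (0, j)) + card (f (1, j))) + (card (f (0, j + 1)) + card (f (1, j + 1))) \<ge> 3"
proof (intro allI impI, rule ccontr)
  fix j assume jn: "j + 1 < n"
  assume "\<not> (card (f (0, j)) + card (f (1, j))) + (card (f (0, j + 1)) + card (f (1, j + 1))) \<ge> 3"
  hence small: "card (f (0, j)) + card (f (1, j)) + card (f (0, j + 1)) + card (f (1, j + 1)) \<le> 2" by simp
  define D where "D = cart_prod (dipath 2) (dipath n)"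
  define V where "V = verts D"
  have V: "V = {0..<2} \<times> {0..<n}" using verts_D V_def D_def by simp
  have ftot: "total_rainbow_dom 2 D f" and fw: "rd_weight D f = gamma_trk 2 D"
    using assms(2) D_def by (auto simp: is_gamma_trk_function_def)
  have sub: "\<forall>v\<in>V. f v \<subseteq> {1..2}"
    and dom: "\<forall>v\<in>V. f v = {} \<longrightarrow> (\<Union>u \<in> in_nbrs D v. f u) = {1..2}"
    and tot: "\<forall>v\<in>V. f v \<noteq> {} \<longrightarrow> (\<exists>u \<in> V. f u \<noteq> {} \<and> ((u, v) \<in> arcs D \<or> (v, u) \<in> arcs D))"
    using ftot by (auto simp: total_rainbow_dom_def rainbow_dom_def V_def)
  have inV: "\<And>a b. a < 2 \<Longrightarrow> b < n \<Longrightarrow> (a,b) \<in> V" using V by simp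
  have fin: "\<And>a b. a < 2 \<Longrightarrow> b < n \<Longrightarrow> finite (f (a,b))"
    using sub inV fin12 by blast
  have nb01: "in_nbrs D (0, Suc j) = {(0,j)}" using jn unfolding D_def by (auto simp: in_nbrs_D)
  have nb11: "in_nbrs D (1, Suc j) = {(0,Suc j),(1,j)}" using jn unfolding D_def by (auto simp: in_nbrs_D)
  have nb1j: "j > 0 \<Longrightarrow> in_nbrs D (1, j) = {(0,j),(1,j-1)}" using jn unfolding D_def by (auto simp: in_nbrs_D)
  have nb0j: "j > 0 \<Longrightarrow> in_nbrs D (0, j) = {(0,j-1)}" using jn unfolding D_def by (auto simp: in_nbrs_D)
  have nb00: "in_nbrs D (0, 0) = {}" unfolding D_def by (auto simp: in_nbrs_D)
  have ne_card: "\<And>a b. a < 2 \<Longrightarrow> b < n \<Longrightarrow> f (a,b) \<noteq> {} \<longleftrightarrow> card (f (a,b)) \<ge> 1"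
  proof -
    fix a b :: nat assume "a < 2" "b < n"
    hence "finite (f (a,b))" using fin by blast
    thus "f (a,b) \<noteq> {} \<longleftrightarrow> card (f (a,b)) \<ge> 1" by (simp add: Suc_le_eq card_gt_0_iff)
  qed
  have s1: "f (0, Suc j) \<noteq> {}"
  proof
    assume e: "f (0, Suc j) = {}"
    hence "f (0,j) = {1..2}" using dom inV[of 0 "Suc j"] jn nb01 by auto
    hence "card (f (0,j)) = 2" by simp
    hence "card (f (1, Suc j)) = 0" using small by simp
    hence "f (1, Suc j) = {}" using fin[of 1 "Suc j"] jn by simp
    moreover have "card (f (1,j)) = 0" using small \<open>card (f (0,j)) = 2\<close> by simp
    hence "f (1, j) = {}" using fin[of 1 j] jn by simp
    ultimately show False using dom inV[of 1 "Suc j"] jn nb11 e by auto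
  qed
  have s2: "f (0, j) = {}"
  proof (rule ccontr)
    assume ne: "f (0, j) \<noteq> {}"
    have c1: "card (f (0,j)) \<ge> 1" using ne ne_card jn by simp
    have c2: "card (f (0,Suc j)) \<ge> 1" using s1 ne_card jn by simp
    have "card (f (1,j)) = 0" "card (f (1,Suc j)) = 0" using small c1 c2 by auto
    hence e1: "f (1,j) = {}" and e2: "f (1, Suc j) = {}" using fin[of 1 j] fin[of 1 "Suc j"] jn by auto
    hence "f (0, Suc j) \<union> f (1,j) = {1..2}" using dom inV[of 1 "Suc j"] jn nb11 by auto
    hence "card (f (0, Suc j)) = 2" using e1 by simp
    thus False using small c1 by simp
  qed
  have jpos: "j > 0"
  proof (rule ccontr)
    assume "\<not> j > 0" hence "j = 0" by simp
    thus False using dom inV[of 0 0] jn nb00 s2 by auto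
  qed
  have s3: "f (0, j-1) = {1..2}" using dom inV[of 0 j] jn nb0j[OF jpos] s2 by auto
  have s4: "f (1, j-1) \<noteq> {}"
  proof (cases "f (1,j) = {}")
    case True
    have "(\<Union>u \<in> in_nbrs D (1,j). f u) = {1..2}" using dom[rule_format, OF inV[of 1 j]] jn True by simp
    hence "f (0,j) \<union> f (1,j-1) = {1..2}" using nb1j[OF jpos] by simp
    thus ?thesis using s2 by simp
  next
    case False
    have c1: "card (f (1,j)) \<ge> 1" using False ne_card jn by simp
    have c2: "card (f (0,Suc j)) \<ge> 1" using s1 ne_card jn by simp
    have "card (f (1,Suc j)) = 0" using small c1 c2 by auto
    hence e2: "f (1, Suc j) = {}" using fin[of 1 "Suc j"] jn by auto
    have v1: "(1,j) \<in> V" using inV jn by simp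
    obtain u where u: "u \<in> V" "f u \<noteq> {}" "(u, (1,j)) \<in> arcs D \<or> ((1,j), u) \<in> arcs D"
      using tot[rule_format, OF v1 False] by blast
    obtain a b where ab: "u = (a,b)" by (cases u)
    have "(a = 0 \<and> b = j) \<or> (a = 1 \<and> j = Suc b) \<or> (a = 1 \<and> b = Suc j)"
      using u(3) unfolding ab D_def arcs_D by auto
    hence "u = (0,j) \<or> u = (1,j-1) \<or> u = (1, Suc j)"
      using ab by auto
    thus ?thesis using u(2) s2 e2 by auto
  qed
  define g where "g = f((0,j-1) := {1}, (0,j) := {1})"
  have pq: "(0,j-1) \<noteq> (0::nat,j)" using jpos by auto
  have g1: "g (0,j-1) = {1}" using pq unfolding g_def by simp
  have g2: "g (0,j) = {1}" unfolding g_def by simp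
  have g3: "\<And>v. v \<noteq> (0,j-1) \<Longrightarrow> v \<noteq> (0,j) \<Longrightarrow> g v = f v" unfolding g_def by simp
  have gne: "\<And>v. f v \<noteq> {} \<Longrightarrow> g v \<noteq> {}" using g1 g2 g3 by (metis insert_not_empty)
  have gtot: "total_rainbow_dom 2 D g"
    unfolding total_rainbow_dom_def rainbow_dom_def
  proof (intro conjI ballI impI)
    fix v assume "v \<in> verts D"
    thus "g v \<subseteq> {1..2}" using sub g1 g2 g3 unfolding V_def by (cases "v = (0,j-1)"; cases "v = (0,j)") auto
  next
    fix v assume vV: "v \<in> verts D" and gv: "g v = {}"
    have v1: "v \<noteq> (0,j-1)" "v \<noteq> (0,j)" using gv g1 g2 by auto
    have fv: "f v = {}" using gv v1 g3 by auto
    show "(\<Union>u \<in> in_nbrs D v. g u) = {1..2}"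
    proof (cases "v = (1,j)")
      case True
      have "(\<Union>u \<in> in_nbrs D v. g u) = {1} \<union> f (1,j-1)"
        using True nb1j[OF jpos] g2 g3[of "(1,j-1)"] by auto
      moreover have "(\<Union>u \<in> in_nbrs D (1,j). f u) = {1..2}"
        using dom[rule_format, of "(1,j)"] vV fv True V_def by simp
      hence "f (0,j) \<union> f (1,j-1) = {1..2}" using nb1j[OF jpos] by simp
      ultimately show ?thesis using s2 by auto
    next
      case False
      have v2: "v \<noteq> (1,j-1)" using fv s4 by auto
      have v3: "v \<noteq> (0,Suc j)" using fv s1 by auto
      obtain a b where ab: "v = (a,b)" by (cases v)
      have n1: "(0,j-1) \<notin> in_nbrs D v" "(0,j) \<notin> in_nbrs D v"
        using v1 v2 v3 False jpos unfolding ab D_def in_nbrs_D by auto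
      have "(\<Union>u \<in> in_nbrs D v. g u) = (\<Union>u \<in> in_nbrs D v. f u)"
        by (rule SUP_cong[OF refl]) (metis g3 n1)
      moreover have "(\<Union>u \<in> in_nbrs D v. f u) = {1..2}"
        using dom[rule_format, of v] vV fv V_def by simp
      ultimately show ?thesis by simp
    qed
  next
    fix v assume vV: "v \<in> verts D" and gv: "g v \<noteq> {}"
    show "\<exists>u \<in> verts D. g u \<noteq> {} \<and> ((u, v) \<in> arcs D \<or> (v, u) \<in> arcs D)"
    proof (cases "v = (0,j-1)")
      case True
      show ?thesis
        by (rule bexI[of _ "(1,j-1)"]) (use True s4 gne inV[of 1 "j-1"] jn in \<open>auto simp: V_def D_def arcs_D\<close>)
    next
      case F1: False
      show ?thesis
      proof (cases "v = (0,j)")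
        case True
        show ?thesis
          by (rule bexI[of _ "(0,Suc j)"]) (use True s1 gne inV[of 0 "Suc j"] jn in \<open>auto simp: V_def D_def arcs_D\<close>)
      next
        case False
        hence "f v \<noteq> {}" using F1 gv g3 by auto
        then obtain u where "u \<in> V" "f u \<noteq> {}" "(u, v) \<in> arcs D \<or> (v, u) \<in> arcs D"
          using tot[rule_format, of v] vV V_def by blast
        thus ?thesis using gne V_def by blast
      qed
    qed
  qed
  have finV: "finite V" using V by simp
  have p: "(0,j-1) \<in> V" and q: "(0,j) \<in> V" using inV jn by auto
  have sumsplit: "\<And>h :: nat \<times> nat \<Rightarrow> nat. (\<Sum>v\<in>V. h v) = h (0,j-1) + h (0,j) + (\<Sum>v\<in>V - {(0,j-1)} - {(0,j)}. h v)"
  proof -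
    fix h :: "nat \<times> nat \<Rightarrow> nat"
    have "(\<Sum>v\<in>V. h v) = h (0,j-1) + (\<Sum>v\<in>V - {(0,j-1)}. h v)"
      using finV p by (rule sum.remove)
    also have "(\<Sum>v\<in>V - {(0,j-1)}. h v) = h (0,j) + (\<Sum>v\<in>V - {(0,j-1)} - {(0,j)}. h v)"
      using finV q pq by (intro sum.remove) auto
    finally show "(\<Sum>v\<in>V. h v) = h (0,j-1) + h (0,j) + (\<Sum>v\<in>V - {(0,j-1)} - {(0,j)}. h v)" by simp
  qed
  have rest: "(\<Sum>v\<in>V - {(0,j-1)} - {(0,j)}. card (g v)) = (\<Sum>v\<in>V - {(0,j-1)} - {(0,j)}. card (f v))"
    using g3 by (intro sum.cong) auto
  have "rd_weight D g = rd_weight D f"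
    unfolding rd_weight_def V_def[symmetric]
    using sumsplit[of "\<lambda>v. card (g v)"] sumsplit[of "\<lambda>v. card (f v)"] rest s2 s3 g1 g2 by simp
  hence gg: "is_gamma_trk_function 2 D g" using gtot fw by (simp add: is_gamma_trk_function_def)
  have eset: "{v \<in> V. g v = {}} = {v \<in> V. f v = {}} - {(0,j)}"
  proof (rule set_eqI)
    fix v
    show "v \<in> {v \<in> V. g v = {}} \<longleftrightarrow> v \<in> {v \<in> V. f v = {}} - {(0,j)}"
      using s3 g1 g2 g3[of v] by (cases "v = (0,j-1)"; cases "v = (0,j)") auto
  qed
  have "(0,j) \<in> {v \<in> V. f v = {}}" using q s2 by auto
  hence "card {v \<in> V. g v = {}} < card {v \<in> V. f v = {}}"
    unfolding eset using finV by (intro card_Diff1_less) auto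
  hence "num_empty D g < num_empty D f" by (simp add: num_empty_def V_def)
  thus False using assms(3) gg D_def by fastforce
qed

end
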